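(* Let $m$ be a positive integer, let $\gamma=(f,g,h)\in C^m(\mathbb{R},\mathbb{R}^3)$ be a horizontal curve, and let $K\subseteq\mathbb{R}$ be compact. Then (1) the $m$th divided differences of $\gamma$ converge uniformly on $K$, and (2) $\gamma$ (restricted to $K$) satisfies the discrete $A/V$ condition on $K$.
   Context: A curve $\gamma=(f,g,h)$ with $f,g,h$ absolutely continuous is horizontal if $h'=2(f'g-fg')$ a.e. $C^m(\mathbb{R},\mathbb{R}^3)$: curves whose components are $m$-times continuously differentiable with bounded $m$th derivative. Divided differences: $\phi[x_0]=\phi(x_0)$, $\phi[x_0,\dots,x_k]=(\phi[x_1,\dots,x_k]-\phi[x_0,\dots,x_{k-1}])/(x_k-x_0)$ for distinct points. The $m$th divided differences of $\phi$ converge uniformly on $K$ if for every $\varepsilon>0$ there is $\delta>0$ with $|\phi[X]-\phi[Y]|<\varepsilon$ whenever $X,Y$ are sets of $m+1$ distinct points of $K$ with $\operatorname{diam}(X\cup Y)<\delta$; for $\gamma$ this is required of each component. For $X$ of $m+1$ distinct points, $P(X;\phi)$ is the unique polynomial of degree $\le m$ agreeing with $\phi$ on $X$ (Newton interpolation polynomial). For $\gamma=(f,g,h):E\to\mathbb{R}^3$, $X\subseteq E$, $\#X=m+1$, $P_f=P(X;f)$, $P_g=P(X;g)$, $a,b\in X$: $A[X,\gamma;a,b]=h(b)-h(a)-2\int_a^b(P_f'P_g-P_g'P_f)$, $V[X,\gamma;a,b]=\operatorname{diam}(X)^{2m}+\operatorname{diam}(X)^m\int_a^b(|P_f'|+|P_g'|)$.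 $\gamma$ satisfies the discrete $A/V$ condition on $E$ if for every $\varepsilon>0$ there is $\delta>0$ such that $|A[X,\gamma;a,b]/V[X,\gamma;a,b]|<\varepsilon$ for all $X\subseteq E$ with $\#X=m+1$, $\operatorname{diam}X<\delta$, and $a,b\in X$ with $a<b$. *)

theory Defs
  imports "HOL-Analysis.Analysis" "HOL-Computational_Algebra.Polynomial"
begin

fun divdiff_list :: "(real \<Rightarrow> real) \<Rightarrow> real list \<Rightarrow> real" where
  "divdiff_list \<phi> [] = 0"
| "divdiff_list \<phi> [x] = \<phi> x"
| "divdiff_list \<phi> (x # y # zs) =
     (divdiff_list \<phi> (y # zs) - divdiff_list \<phi> (x # butlast (y # zs)))
       / (last (y # zs) - x)"

text \<open>Divided difference of phi on a finite set X of distinct points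
  (points listed in increasing order; divided differences are symmetric).\<close>
definition divdiff :: "(real \<Rightarrow> real) \<Rightarrow> real set \<Rightarrow> real" where
  "divdiff \<phi> X = divdiff_list \<phi> (sorted_list_of_set X)"

definition Cm :: "nat \<Rightarrow> (real \<Rightarrow> real) \<Rightarrow> bool" where
  "Cm m \<phi> \<longleftrightarrow> (\<forall>k<m. \<forall>t. (deriv ^^ k) \<phi> differentiable (at t))
      \<and> continuous_on UNIV ((deriv ^^ m) \<phi>)
      \<and> bounded (range ((deriv ^^ m) \<phi>))"

definition abs_continuous_on :: "real set \<Rightarrow> (real \<Rightarrow> real) \<Rightarrow> bool" where
  "abs_continuous_on S \<phi> \<longleftrightarrow>
    (\<forall>\<epsilon>>0. \<exists>\<delta>>0. \<forall>(n::nat) (a::nat \<Rightarrow> real) b.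
       (\<forall>i<n. a i \<le> b i \<and> {a i..b i} \<subseteq> S)
       \<and> (\<forall>i<n. \<forall>j<n. i \<noteq> j \<longrightarrow> b i \<le> a j \<or> b j \<le> a i)
       \<and> (\<Sum>i<n. b i - a i) < \<delta>
       \<longrightarrow> (\<Sum>i<n. \<bar>\<phi> (b i) - \<phi> (a i)\<bar>) < \<epsilon>)"

definition abs_continuous :: "(real \<Rightarrow> real) \<Rightarrow> bool" where
  "abs_continuous \<phi> \<longleftrightarrow> (\<forall>a b. abs_continuous_on {a..b} \<phi>)"

definition horizontal :: "(real \<Rightarrow> real) \<Rightarrow> (real \<Rightarrow> real) \<Rightarrow> (real \<Rightarrow> real) \<Rightarrow> bool" where
  "horizontal f g h \<longleftrightarrow> abs_continuous f \<and> abs_continuous g \<and> abs_continuous h \<and>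
     (AE t in lborel. f differentiable (at t) \<and> g differentiable (at t) \<and>
        (h has_real_derivative 2 * (deriv f t * g t - f t * deriv g t)) (at t))"

definition divdiff_unif_conv :: "nat \<Rightarrow> (real \<Rightarrow> real) \<Rightarrow> real set \<Rightarrow> bool" where
  "divdiff_unif_conv m \<phi> K \<longleftrightarrow>
    (\<forall>\<epsilon>>0. \<exists>\<delta>>0. \<forall>X Y. X \<subseteq> K \<and> Y \<subseteq> K \<and> finite X \<and> finite Y
        \<and> card X = m + 1 \<and> card Y = m + 1 \<and> diameter (X \<union> Y) < \<delta>
        \<longrightarrow> \<bar>divdiff \<phi> X - divdiff \<phi> Y\<bar> < \<epsilon>)"

definition interp_poly :: "real set \<Rightarrow> (real \<Rightarrow> real) \<Rightarrow> real poly" where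
  "interp_poly X \<phi> = (THE p. degree p < card X \<and> (\<forall>x\<in>X. poly p x = \<phi> x))"

definition AVA :: "real set \<Rightarrow> (real \<Rightarrow> real) \<Rightarrow> (real \<Rightarrow> real) \<Rightarrow> (real \<Rightarrow> real)
    \<Rightarrow> real \<Rightarrow> real \<Rightarrow> real" where
  "AVA X f g h a b = h b - h a - 2 * integral {a..b}
     (\<lambda>t. poly (pderiv (interp_poly X f)) t * poly (interp_poly X g) t
        - poly (pderiv (interp_poly X g)) t * poly (interp_poly X f) t)"

definition AVV :: "nat \<Rightarrow> real set \<Rightarrow> (real \<Rightarrow> real) \<Rightarrow> (real \<Rightarrow> real)
    \<Rightarrow> real \<Rightarrow> real \<Rightarrow> real" where
  "AVV m X f g a b = diameter X ^ (2 * m) + diameter X ^ m * integral {a..b}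
     (\<lambda>t. \<bar>poly (pderiv (interp_poly X f)) t\<bar> + \<bar>poly (pderiv (interp_poly X g)) t\<bar>)"

definition discrete_AV :: "nat \<Rightarrow> (real \<Rightarrow> real) \<Rightarrow> (real \<Rightarrow> real) \<Rightarrow> (real \<Rightarrow> real)
    \<Rightarrow> real set \<Rightarrow> bool" where
  "discrete_AV m f g h E \<longleftrightarrow>
    (\<forall>\<epsilon>>0. \<exists>\<delta>>0. \<forall>X a b. X \<subseteq> E \<and> finite X \<and> card X = m + 1 \<and> diameter X < \<delta>
        \<and> a \<in> X \<and> b \<in> X \<and> a < b
        \<longrightarrow> \<bar>AVA X f g h a b / AVV m X f g a b\<bar> < \<epsilon>)"

end

theory Submission
  imports Defs
begin



lemma neville:
  fixes \<phi> :: "real \<Rightarrow> real"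
  shows "distinct xs \<Longrightarrow> length xs = Suc k \<Longrightarrow>
    \<exists>p. degree p \<le> k \<and> (\<forall>x\<in>set xs. poly p x = \<phi> x) \<and> coeff p k = divdiff_list \<phi> xs"
proof (induction k arbitrary: xs)
  case 0
  then obtain x where xs: "xs = [x]" by (cases xs) auto
  show ?case by (rule exI[of _ "[:\<phi> x:]"]) (simp add: xs)
next
  case (Suc k)
  then obtain x y zs where xs: "xs = x # y # zs"
    by (cases xs; cases "tl xs") auto
  define l where "l = last (y # zs)"
  define ys where "ys = x # butlast (y # zs)"
  have d1: "distinct (y # zs)" and len1: "length (y # zs) = Suc k" using Suc.prems xs by auto
  have d0: "distinct ys" and len0: "length ys = Suc k" using Suc.prems xs unfolding ys_def
    by (auto dest: in_set_butlastD simp: distinct_butlast)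
  obtain p1 where p1: "degree p1 \<le> k" "\<forall>w\<in>set (y#zs). poly p1 w = \<phi> w"
      "coeff p1 k = divdiff_list \<phi> (y#zs)" using Suc.IH[OF d1 len1] by blast
  obtain p0 where p0: "degree p0 \<le> k" "\<forall>w\<in>set ys. poly p0 w = \<phi> w"
      "coeff p0 k = divdiff_list \<phi> ys" using Suc.IH[OF d0 len0] by blast
  have lin: "l \<in> set (y#zs)" unfolding l_def by simp
  have lx: "l \<noteq> x" using Suc.prems xs lin by auto
  have setxs: "set xs = insert l (set ys)" unfolding xs ys_def l_def
    by (metis append_butlast_last_id list.distinct(1) list.simps(15) set_append insert_commute Un_insert_right sup_bot.right_neutral set_simps(1) set_simps(2))
  have ys_sub: "set ys - {x} \<subseteq> set (y#zs)" unfolding ys_def by (auto dest: in_set_butlastD)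
  define p where "p = smult (1 / (l - x)) ([:-x,1:] * p1 - [:-l,1:] * p0)"
  have deg1: "degree ([:-x,1:] * p1) \<le> Suc k"
    using p1(1) by (intro order.trans[OF degree_mult_le]) simp
  have deg0: "degree ([:-l,1:] * p0) \<le> Suc k"
    using p0(1) by (intro order.trans[OF degree_mult_le]) simp
  have "degree p \<le> Suc k" unfolding p_def
    using degree_diff_le[OF deg1 deg0] by (simp add: degree_smult_le order.trans[OF degree_smult_le])
  moreover have "coeff p (Suc k) = divdiff_list \<phi> xs"
  proof -
    have c1: "coeff ([:-x,1:] * p1) (Suc k) = coeff p1 k"
      using p1(1) by (simp add: mult_pCons_left coeff_eq_0)
    have c0: "coeff ([:-l,1:] * p0) (Suc k) = coeff p0 k"
      using p0(1) by (simp add: mult_pCons_left coeff_eq_0)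
    have z: "coeff p1 (Suc k) = 0" "coeff p0 (Suc k) = 0" using p1(1) p0(1) by (simp_all add: coeff_eq_0)
    show ?thesis unfolding p_def using c1 c0 p1(3) p0(3) z
      by (simp add: xs ys_def l_def divide_simps)
  qed
  moreover have "\<forall>w\<in>set xs. poly p w = \<phi> w"
  proof
    fix w assume w: "w \<in> set xs"
    show "poly p w = \<phi> w"
    proof (cases "w = l")
      case True
      have "poly p1 l = \<phi> l" using p1(2) lin by blast
      then show ?thesis using True lx unfolding p_def by (simp add: field_simps)
    next
      case False
      then have wys: "w \<in> set ys" using w setxs by auto
      show ?thesis
      proof (cases "w = x")
        case True
        then show ?thesis using p0(2) wys lx unfolding p_def by (simp add: field_simps)
      next
        case False
        then have "w \<in> set (y#zs)" using wys ys_sub by auto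
        then have "poly p1 w = \<phi> w" "poly p0 w = \<phi> w" using p0(2) p1(2) wys by blast+
        then show ?thesis using lx unfolding p_def by (simp add: field_simps)
      qed
    qed
  qed
  ultimately show ?case by blast
qed




lemma interp_exists:
  fixes \<phi> :: "real \<Rightarrow> real"
  assumes "finite X" "card X = Suc k"
  shows "\<exists>p. degree p \<le> k \<and> (\<forall>x\<in>X. poly p x = \<phi> x) \<and> coeff p k = divdiff \<phi> X"
proof -
  have "distinct (sorted_list_of_set X)" "length (sorted_list_of_set X) = Suc k"
       "set (sorted_list_of_set X) = X"
    using assms by auto
  then show ?thesis using neville[of "sorted_list_of_set X" k \<phi>] unfolding divdiff_def by metis
qed

lemma interp_poly_eq:
  fixes \<phi> :: "real \<Rightarrow> real"
  assumes "finite X" "card X = Suc k" "degree p \<le> k" "\<forall>x\<in>X. poly p x = \<phi> x"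
  shows "interp_poly X \<phi> = p"
  unfolding interp_poly_def
proof (rule the_equality)
  show "degree p < card X \<and> (\<forall>x\<in>X. poly p x = \<phi> x)" using assms by auto
  fix q assume q: "degree q < card X \<and> (\<forall>x\<in>X. poly q x = \<phi> x)"
  show "q = p" by (rule poly_eqI_degree[of X]) (use q assms in auto)
qed

lemma interp_props:
  fixes \<phi> :: "real \<Rightarrow> real"
  assumes "finite X" "card X = Suc k"
  shows "degree (interp_poly X \<phi>) \<le> k" "\<forall>x\<in>X. poly (interp_poly X \<phi>) x = \<phi> x"
    "coeff (interp_poly X \<phi>) k = divdiff \<phi> X"
proof -
  obtain p where p: "degree p \<le> k" "\<forall>x\<in>X. poly p x = \<phi> x" "coeff p k = divdiff \<phi> X"
    using interp_exists[OF assms] by blast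
  have "interp_poly X \<phi> = p" using interp_poly_eq[OF assms p(1,2)] .
  then show "degree (interp_poly X \<phi>) \<le> k" "\<forall>x\<in>X. poly (interp_poly X \<phi>) x = \<phi> x"
    "coeff (interp_poly X \<phi>) k = divdiff \<phi> X" using p by auto
qed

lemma pderiv_iter_const:
  fixes p :: "real poly"
  shows "degree p \<le> j \<Longrightarrow> (pderiv ^^ j) p = [:fact j * coeff p j:]"
proof (induction j arbitrary: p)
  case 0
  then show ?case by (auto elim!: degree_eq_zeroE)
next
  case (Suc j)
  have "degree (pderiv p) \<le> j" using Suc.prems by (simp add: degree_pderiv)
  then have "(pderiv ^^ j) (pderiv p) = [:fact j * coeff (pderiv p) j:]" by (rule Suc.IH)
  then show ?case by (simp add: funpow_Suc_right coeff_pderiv del: funpow.simps)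
qed

lemma deriv_iter_diff:
  fixes \<phi> :: "real \<Rightarrow> real"
  assumes d: "\<forall>i<k. \<forall>t. (deriv ^^ i) \<phi> differentiable (at t)"
  shows "j \<le> k \<Longrightarrow> (deriv ^^ j) (\<lambda>x. \<phi> x - poly p x) = (\<lambda>x. (deriv ^^ j) \<phi> x - poly ((pderiv ^^ j) p) x)"
proof (induction j)
  case 0
  then show ?case by simp
next
  case (Suc j)
  then have IH: "(deriv ^^ j) (\<lambda>x. \<phi> x - poly p x) = (\<lambda>x. (deriv ^^ j) \<phi> x - poly ((pderiv ^^ j) p) x)"
    by simp
  have "j < k" using Suc.prems by simp
  show ?case
  proof
    fix x
    have "((deriv ^^ j) \<phi> has_real_derivative deriv ((deriv ^^ j) \<phi>) x) (at x)"
      using d \<open>j < k\<close> by (simp add: DERIV_deriv_iff_real_differentiable)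
    then have "((\<lambda>x. (deriv ^^ j) \<phi> x - poly ((pderiv ^^ j) p) x) has_real_derivative
        deriv ((deriv ^^ j) \<phi>) x - poly (pderiv ((pderiv ^^ j) p)) x) (at x)"
      by (intro DERIV_diff poly_DERIV)
    then have "deriv (\<lambda>x. (deriv ^^ j) \<phi> x - poly ((pderiv ^^ j) p) x) x =
        deriv ((deriv ^^ j) \<phi>) x - poly (pderiv ((pderiv ^^ j) p)) x"
      by (rule DERIV_imp_deriv)
    then show "(deriv ^^ Suc j) (\<lambda>x. \<phi> x - poly p x) x =
        (deriv ^^ Suc j) \<phi> x - poly ((pderiv ^^ Suc j) p) x"
      by (simp add: IH)
  qed
qed

lemma rolle_step:
  fixes \<psi> :: "real \<Rightarrow> real"
  assumes d: "\<forall>t. \<psi> differentiable (at t)"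
  shows "finite S \<Longrightarrow> card S = Suc n \<Longrightarrow> \<forall>s\<in>S. \<psi> s = 0 \<Longrightarrow>
    \<exists>S'. finite S' \<and> card S' = n \<and> S' \<subseteq> {Min S..Max S} \<and> (\<forall>z\<in>S'. deriv \<psi> z = 0)"
proof (induction n arbitrary: S)
  case 0
  then show ?case by (intro exI[of _ "{}"]) auto
next
  case (Suc n)
  define M where "M = Max S"
  define S0 where "S0 = S - {M}"
  have ne: "S \<noteq> {}" using Suc.prems by auto
  have MS: "M \<in> S" unfolding M_def using Suc.prems ne by simp
  have fS0: "finite S0" and cS0: "card S0 = Suc n" using Suc.prems MS unfolding S0_def by auto
  have z0: "\<forall>s\<in>S0. \<psi> s = 0" using Suc.prems unfolding S0_def by auto
  obtain S0' where S0': "finite S0'" "card S0' = n" "S0' \<subseteq> {Min S0..Max S0}" "\<forall>z\<in>S0'. deriv \<psi> z = 0"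
    using Suc.IH[OF fS0 cS0 z0] by blast
  have ne0: "S0 \<noteq> {}" using cS0 by auto
  define M0 where "M0 = Max S0"
  have M0S0: "M0 \<in> S0" unfolding M0_def using fS0 ne0 by simp
  have "M0 \<le> M" using M0S0 Suc.prems unfolding M_def S0_def by auto
  moreover have "M0 \<noteq> M" using M0S0 unfolding S0_def by auto
  ultimately have lt: "M0 < M" by simp
  have cont: "continuous_on {M0..M} \<psi>"
    using d by (meson continuous_at_imp_continuous_on differentiable_imp_continuous_within)
  have "\<psi> M0 = \<psi> M" using z0 M0S0 Suc.prems(3) MS by auto
  then obtain z where z: "M0 < z" "z < M" "DERIV \<psi> z :> 0"
    using Rolle[OF lt _ cont] d by blast
  have dz: "deriv \<psi> z = 0" using z(3) by (rule DERIV_imp_deriv)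
  have sub: "S0 \<subseteq> S" unfolding S0_def by auto
  have minle: "Min S \<le> Min S0" using sub ne0 Suc.prems(1) by (simp add: Min_antimono)
  have "z \<notin> S0'" using S0'(3) z(1) unfolding M0_def by auto
  moreover have "Min S \<le> z" using minle z(1) M0S0 fS0 unfolding M0_def
    by (meson Min_le less_le_trans order.trans less_imp_le)
  ultimately show ?case using S0' z dz minle \<open>M0 \<le> M\<close>
    by (intro exI[of _ "insert z S0'"]) (auto simp: M_def M0_def)
qed

lemma gen_rolle:
  fixes \<psi> :: "real \<Rightarrow> real"
  shows "\<forall>j<k. \<forall>t. (deriv ^^ j) \<psi> differentiable (at t) \<Longrightarrow> finite S \<Longrightarrow> card S = Suc k \<Longrightarrow>
    \<forall>s\<in>S. \<psi> s = 0 \<Longrightarrow> \<exists>\<xi>. Min S \<le> \<xi> \<and> \<xi> \<le> Max S \<and> (deriv ^^ k) \<psi> \<xi> = 0"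
proof (induction k arbitrary: \<psi> S)
  case 0
  then obtain s where "S = {s}" by (auto simp: card_Suc_eq)
  then show ?case using 0 by auto
next
  case (Suc k)
  have d0: "\<forall>t. \<psi> differentiable (at t)" using Suc.prems(1) by (metis funpow_0 zero_less_Suc)
  obtain S' where S': "finite S'" "card S' = Suc k" "S' \<subseteq> {Min S..Max S}" "\<forall>z\<in>S'. deriv \<psi> z = 0"
    using rolle_step[OF d0 Suc.prems(2,3,4)] by blast
  have dd: "\<forall>j<k. \<forall>t. (deriv ^^ j) (deriv \<psi>) differentiable (at t)"
  proof (intro allI impI)
    fix j t assume "j < k"
    then have "(deriv ^^ Suc j) \<psi> differentiable (at t)" using Suc.prems(1) by blast
    then show "(deriv ^^ j) (deriv \<psi>) differentiable (at t)"
      by (simp only: funpow_Suc_right o_def)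
  qed
  obtain \<xi> where xi: "Min S' \<le> \<xi>" "\<xi> \<le> Max S'" "(deriv ^^ k) (deriv \<psi>) \<xi> = 0"
    using Suc.IH[OF dd S'(1,2,4)] by blast
  have ne: "S' \<noteq> {}" using S'(2) by auto
  have "Min S' \<in> S'" "Max S' \<in> S'" using S'(1) ne by auto
  then have "Min S \<le> Min S'" "Max S' \<le> Max S" using S'(3) by auto
  then show ?case using xi by (intro exI[of _ \<xi>]) (auto simp: funpow_Suc_right simp del: funpow.simps)
qed

lemma dd_mvt:
  fixes \<phi> :: "real \<Rightarrow> real"
  assumes d: "\<forall>i<k. \<forall>t. (deriv ^^ i) \<phi> differentiable (at t)"
    and S: "finite S" "card S = Suc k" and p: "degree p \<le> k" "\<forall>x\<in>S. poly p x = \<phi> x"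
  shows "\<exists>\<xi>. Min S \<le> \<xi> \<and> \<xi> \<le> Max S \<and> (deriv ^^ k) \<phi> \<xi> = fact k * coeff p k"
proof -
  define \<psi> where "\<psi> = (\<lambda>x. \<phi> x - poly p x)"
  have dpsi: "\<forall>j<k. \<forall>t. (deriv ^^ j) \<psi> differentiable (at t)"
  proof (intro allI impI)
    fix j t assume j: "j < k"
    have "(deriv ^^ j) \<psi> = (\<lambda>x. (deriv ^^ j) \<phi> x - poly ((pderiv ^^ j) p) x)"
      unfolding \<psi>_def using deriv_iter_diff[OF d, of j p] j by simp
    moreover have "(\<lambda>x. (deriv ^^ j) \<phi> x - poly ((pderiv ^^ j) p) x) differentiable (at t)"
      using d j by (intro derivative_intros) auto
    ultimately show "(deriv ^^ j) \<psi> differentiable (at t)" by simp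
  qed
  have z: "\<forall>s\<in>S. \<psi> s = 0" using p(2) unfolding \<psi>_def by auto
  obtain \<xi> where xi: "Min S \<le> \<xi>" "\<xi> \<le> Max S" "(deriv ^^ k) \<psi> \<xi> = 0"
    using gen_rolle[OF dpsi S z] by blast
  have "(deriv ^^ k) \<psi> = (\<lambda>x. (deriv ^^ k) \<phi> x - poly ((pderiv ^^ k) p) x)"
    unfolding \<psi>_def using deriv_iter_diff[OF d, of k p] by simp
  then have "(deriv ^^ k) \<phi> \<xi> = fact k * coeff p k" using xi(3) pderiv_iter_const[OF p(1)] by simp
  then show ?thesis using xi by blast
qed




lemma interp_err:
  fixes \<phi> :: "real \<Rightarrow> real"
  assumes d: "\<forall>i<k. \<forall>t. (deriv ^^ i) \<phi> differentiable (at t)"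
    and X: "finite X" "card X = Suc k" and p: "degree p \<le> k" "\<forall>x\<in>X. poly p x = \<phi> x"
    and e: "\<And>\<xi>1 \<xi>2. min (Min X) t \<le> \<xi>1 \<Longrightarrow> \<xi>1 \<le> max (Max X) t \<Longrightarrow>
              min (Min X) t \<le> \<xi>2 \<Longrightarrow> \<xi>2 \<le> max (Max X) t \<Longrightarrow>
              \<bar>(deriv ^^ k) \<phi> \<xi>1 - (deriv ^^ k) \<phi> \<xi>2\<bar> \<le> e"
    and dd: "\<forall>x\<in>X. \<bar>t - x\<bar> \<le> dd"
  shows "\<bar>\<phi> t - poly p t\<bar> \<le> e / fact k * dd ^ k"
proof -
  have ne: "X \<noteq> {}" using X by auto
  have e0: "0 \<le> e" using e[of t t] by simp
  have dd0: "0 \<le> dd" using dd ne by force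
  show ?thesis
  proof (cases "t \<in> X")
    case True
    then show ?thesis using p(2) e0 dd0 by simp
  next
    case False
    define x0 where "x0 = Min X"
    have x0X: "x0 \<in> X" unfolding x0_def using X ne by simp
    define X1 where "X1 = X - {x0}"
    have fX1: "finite X1" and cX1: "card X1 = k" using X x0X unfolding X1_def by auto
    define X' where "X' = insert t X1"
    have fX': "finite X'" and cX': "card X' = Suc k" using fX1 cX1 False unfolding X'_def X1_def by auto
    obtain q where q: "degree q \<le> k" "\<forall>x\<in>X'. poly q x = \<phi> x"
      using interp_exists[OF fX' cX', of \<phi>] by blast
    obtain \<xi>1 where xi1: "Min X' \<le> \<xi>1" "\<xi>1 \<le> Max X'" "(deriv ^^ k) \<phi> \<xi>1 = fact k * coeff q k"
      using dd_mvt[OF d fX' cX' q] by blast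
    obtain \<xi>2 where xi2: "Min X \<le> \<xi>2" "\<xi>2 \<le> Max X" "(deriv ^^ k) \<phi> \<xi>2 = fact k * coeff p k"
      using dd_mvt[OF d X p] by blast
    have neX': "X' \<noteq> {}" unfolding X'_def by simp
    have X'sub: "X' \<subseteq> insert t X" unfolding X'_def X1_def by auto
    have "Min X' \<in> X'" "Max X' \<in> X'" using fX' neX' by auto
    then have o1: "Min X' = t \<or> Min X' \<in> X" and o2: "Max X' = t \<or> Max X' \<in> X" using X'sub by blast+
    have b1: "min (Min X) t \<le> Min X'"
      using o1 Min_le[OF X(1), of "Min X'"] by linarith
    have b2: "Max X' \<le> max (Max X) t"
      using o2 Max_ge[OF X(1), of "Max X'"] by linarith
    have ebound: "\<bar>fact k * coeff q k - fact k * coeff p k\<bar> \<le> e"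
  proof -
    have "min (Min X) t \<le> \<xi>1" "\<xi>1 \<le> max (Max X) t" "min (Min X) t \<le> \<xi>2" "\<xi>2 \<le> max (Max X) t"
      using xi1(1,2) xi2(1,2) b1 b2 by (simp_all add: min_le_iff_disj le_max_iff_disj, linarith+)
    from e[OF this] show ?thesis by (simp only: xi1(3) xi2(3))
  qed
    define c where "c = coeff q k - coeff p k"
    have cb: "\<bar>c\<bar> \<le> e / fact k"
    proof -
      have fk: "fact k > (0::real)" by simp
      have "c = (fact k * coeff q k - fact k * coeff p k) / fact k"
        unfolding c_def using fk by (simp add: field_simps)
      then have "\<bar>c\<bar> = \<bar>fact k * coeff q k - fact k * coeff p k\<bar> / fact k" by simp
      also have "\<dots> \<le> e / fact k" using ebound fk by (intro divide_right_mono) auto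
      finally show ?thesis .
    qed
    define W where "W = (\<Prod>x\<in>X1. [:-x, 1:])"
    have degW: "degree W = k" unfolding W_def using cX1
      by (subst degree_prod_eq_sum_degree) auto
    have lcW: "coeff W k = 1"
      using lead_coeff_prod[of "\<lambda>x. [:-x, 1:]" X1] degW unfolding W_def by simp
    have eq: "q - p = smult c W"
    proof (rule poly_eqI_degree_lead_coeff[where n=k and A=X1])
      show "coeff (q - p) k = coeff (smult c W) k" using lcW by (simp add: c_def)
      show "k \<le> card X1" using cX1 by simp
      show "degree (q - p) \<le> k" using q(1) p(1) by (simp add: degree_diff_le)
      show "degree (smult c W) \<le> k" using degW by (simp add: degree_smult_le order.trans[OF degree_smult_le])
      fix z assume z: "z \<in> X1"
      then have "poly q z = \<phi> z" "poly p z = \<phi> z" using q(2) p(2) unfolding X'_def X1_def by auto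
      moreover have "poly W z = 0" unfolding W_def poly_prod using z fX1
        by (auto intro: prod_zero)
      ultimately show "poly (q - p) z = poly (smult c W) z" by simp
    qed
    have "\<phi> t - poly p t = poly q t - poly p t" using q(2) unfolding X'_def by simp
    also have "\<dots> = c * poly W t" using arg_cong[OF eq, of "\<lambda>r. poly r t"] by simp
    finally have eqt: "\<phi> t - poly p t = c * (\<Prod>x\<in>X1. t - x)" unfolding W_def poly_prod by simp
    have "\<bar>\<Prod>x\<in>X1. t - x\<bar> = (\<Prod>x\<in>X1. \<bar>t - x\<bar>)" by (simp add: abs_prod)
    also have "\<dots> \<le> (\<Prod>x\<in>X1. dd)" using dd unfolding X1_def by (intro prod_mono) auto
    also have "\<dots> = dd ^ k" using cX1 by simp
    finally have pb: "\<bar>\<Prod>x\<in>X1. t - x\<bar> \<le> dd ^ k" .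
    have "\<bar>\<phi> t - poly p t\<bar> = \<bar>c\<bar> * \<bar>\<Prod>x\<in>X1. t - x\<bar>" unfolding eqt abs_mult ..
    also have "\<dots> \<le> e / fact k * dd ^ k"
      using cb pb by (intro mult_mono) auto
    finally show ?thesis .
  qed
qed




lemma Cm_diff: "Cm m \<phi> \<Longrightarrow> i < m \<Longrightarrow> (deriv ^^ i) \<phi> differentiable (at t)"
  unfolding Cm_def by blast

lemma Cm_diffs: "Cm m \<phi> \<Longrightarrow> \<forall>i<m. \<forall>t. (deriv ^^ i) \<phi> differentiable (at t)"
  unfolding Cm_def by blast

lemma Cm_cont: "Cm m \<phi> \<Longrightarrow> i \<le> m \<Longrightarrow> continuous_on UNIV ((deriv ^^ i) \<phi>)"
proof -
  assume c: "Cm m \<phi>" and i: "i \<le> m"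
  show ?thesis
  proof (cases "i = m")
    case True
    then show ?thesis using c unfolding Cm_def by blast
  next
    case False
    then have "\<forall>t. (deriv ^^ i) \<phi> differentiable (at t)" using c i unfolding Cm_def by auto
    then show ?thesis
      by (meson continuous_at_imp_continuous_on differentiable_imp_continuous_within)
  qed
qed

lemma Cm_DERIV: "Cm m \<phi> \<Longrightarrow> 0 < m \<Longrightarrow> (\<phi> has_real_derivative deriv \<phi> t) (at t)"
  using Cm_diff[of m \<phi> 0 t] by (simp add: DERIV_deriv_iff_real_differentiable)

lemma Cm_cont0: "Cm m \<phi> \<Longrightarrow> continuous_on UNIV \<phi>"
  using Cm_cont[of m \<phi> 0] by simp

lemma Cm_cont1: "Cm m \<phi> \<Longrightarrow> 0 < m \<Longrightarrow> continuous_on UNIV (deriv \<phi>)"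
  using Cm_cont[of m \<phi> 1] by simp

lemma AE_cont_eq:
  fixes F G :: "real \<Rightarrow> real"
  assumes cF: "continuous_on UNIV F" and cG: "continuous_on UNIV G"
    and ae: "AE t in lborel. F t = G t"
  shows "F t = G t"
proof (rule ccontr)
  assume ne: "F t \<noteq> G t"
  have "continuous (at t) (\<lambda>x. F x - G x)"
    using cF cG by (intro continuous_intros) (auto simp: continuous_on_eq_continuous_at)
  moreover have "F t - G t \<noteq> 0" using ne by simp
  ultimately obtain r where r: "r > 0" "\<forall>y. dist t y < r \<longrightarrow> F y - G y \<noteq> 0"
    using continuous_at_avoid by blast
  obtain N where N: "N \<in> null_sets lborel" "{x \<in> space lborel. \<not> F x = G x} \<subseteq> N"
    using ae unfolding eventually_ae_filter by blast
  have "{t - r<..<t + r} \<subseteq> N"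
  proof
    fix y assume "y \<in> {t - r<..<t + r}"
    then have "dist t y < r" by (auto simp: dist_real_def)
    then show "y \<in> N" using r N(2) by auto
  qed
  then have "emeasure lborel {t - r<..<t + r} \<le> emeasure lborel N"
    using N(1) by (intro emeasure_mono) auto
  also have "\<dots> = 0" using N(1) by auto
  finally show False using r(1) by simp
qed

lemma diam_ge:
  fixes X :: "real set"
  assumes "finite X" "x \<in> X" "y \<in> X"
  shows "\<bar>x - y\<bar> \<le> diameter X"
  using diameter_bounded_bound[of X x y] assms by (simp add: finite_imp_bounded dist_real_def)

lemma compact_in_interval:
  fixes K :: "real set"
  assumes "compact K"
  obtains R where "K \<subseteq> {-R..R}"
proof -
  obtain R where "\<forall>x\<in>K. norm x \<le> R" using compact_imp_bounded[OF assms] bounded_iff by blast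
  then have "K \<subseteq> {-R..R}" by (auto simp: abs_le_iff)
  then show ?thesis using that by blast
qed

lemma part1:
  assumes c: "Cm m \<phi>" and K: "compact K"
  shows "divdiff_unif_conv m \<phi> K"
  unfolding divdiff_unif_conv_def
proof (intro allI impI)
  fix \<epsilon> :: real assume e: "\<epsilon> > 0"
  obtain R where KR: "K \<subseteq> {-R..R}" using compact_in_interval[OF K] by blast
  have "uniformly_continuous_on {-R..R} ((deriv ^^ m) \<phi>)"
    using Cm_cont[OF c order_refl] by (intro compact_uniformly_continuous) (auto intro: continuous_on_subset)
  then obtain d where d: "d > 0" "\<forall>x\<in>{-R..R}. \<forall>x'\<in>{-R..R}. dist x' x < d \<longrightarrow>
      dist ((deriv ^^ m) \<phi> x') ((deriv ^^ m) \<phi> x) < \<epsilon>"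
    unfolding uniformly_continuous_on_def using e by blast
  show "\<exists>\<delta>>0. \<forall>X Y. X \<subseteq> K \<and> Y \<subseteq> K \<and> finite X \<and> finite Y \<and> card X = m + 1 \<and> card Y = m + 1
        \<and> diameter (X \<union> Y) < \<delta> \<longrightarrow> \<bar>divdiff \<phi> X - divdiff \<phi> Y\<bar> < \<epsilon>"
  proof (intro exI[of _ d] conjI d(1) allI impI)
    fix X Y assume a: "X \<subseteq> K \<and> Y \<subseteq> K \<and> finite X \<and> finite Y \<and> card X = m + 1 \<and> card Y = m + 1
        \<and> diameter (X \<union> Y) < d"
    have fX: "finite X" "card X = Suc m" and fY: "finite Y" "card Y = Suc m" using a by auto
    have neX: "X \<noteq> {}" and neY: "Y \<noteq> {}" using fX fY by auto
    obtain \<xi> where xi: "Min X \<le> \<xi>" "\<xi> \<le> Max X" "(deriv ^^ m) \<phi> \<xi> = fact m * divdiff \<phi> X"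
      using dd_mvt[OF Cm_diffs[OF c] fX interp_props(1,2)[OF fX]] interp_props(3)[OF fX] by metis
    obtain \<eta> where eta: "Min Y \<le> \<eta>" "\<eta> \<le> Max Y" "(deriv ^^ m) \<phi> \<eta> = fact m * divdiff \<phi> Y"
      using dd_mvt[OF Cm_diffs[OF c] fY interp_props(1,2)[OF fY]] interp_props(3)[OF fY] by metis
    have mem: "Min X \<in> X" "Max X \<in> X" "Min Y \<in> Y" "Max Y \<in> Y" using fX fY neX neY by auto
    have fU: "finite (X \<union> Y)" using fX fY by simp
    have "\<bar>Max X - Min Y\<bar> \<le> diameter (X \<union> Y)" "\<bar>Max Y - Min X\<bar> \<le> diameter (X \<union> Y)"
      using diam_ge[OF fU] mem by auto
    then have dxe: "dist \<xi> \<eta> < d" using xi eta a by (auto simp: dist_real_def abs_le_iff)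
    have inR: "\<xi> \<in> {-R..R}" "\<eta> \<in> {-R..R}" using mem a KR xi eta by force+
    have "\<bar>fact m * divdiff \<phi> X - fact m * divdiff \<phi> Y\<bar> < \<epsilon>"
      using d(2) inR dxe xi(3) eta(3) by (metis dist_real_def)
    then have "fact m * \<bar>divdiff \<phi> X - divdiff \<phi> Y\<bar> < \<epsilon>"
      by (simp add: abs_mult flip: right_diff_distrib)
    moreover have "\<bar>divdiff \<phi> X - divdiff \<phi> Y\<bar> \<le> fact m * \<bar>divdiff \<phi> X - divdiff \<phi> Y\<bar>"
      by (rule mult_le_cancel_right1[THEN iffD2]) (auto)
    ultimately show "\<bar>divdiff \<phi> X - divdiff \<phi> Y\<bar> < \<epsilon>" by linarith
  qed
qed




lemma val_err:
  fixes \<phi> :: "real \<Rightarrow> real"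
  assumes c: "Cm m \<phi>" and fX: "finite X" "card X = Suc m"
    and e: "\<And>\<xi>1 \<xi>2. Min X \<le> \<xi>1 \<Longrightarrow> \<xi>1 \<le> Max X \<Longrightarrow> Min X \<le> \<xi>2 \<Longrightarrow> \<xi>2 \<le> Max X \<Longrightarrow>
              \<bar>(deriv ^^ m) \<phi> \<xi>1 - (deriv ^^ m) \<phi> \<xi>2\<bar> \<le> e"
    and t: "Min X \<le> t" "t \<le> Max X" and dd: "Max X - Min X \<le> dd"
  shows "\<bar>\<phi> t - poly (interp_poly X \<phi>) t\<bar> \<le> e / fact m * dd ^ m"
proof (rule interp_err[OF Cm_diffs[OF c] fX interp_props(1,2)[OF fX]])
  fix \<xi>1 \<xi>2
  assume "min (Min X) t \<le> \<xi>1" "\<xi>1 \<le> max (Max X) t" "min (Min X) t \<le> \<xi>2" "\<xi>2 \<le> max (Max X) t"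
  moreover have "min (Min X) t = Min X" "max (Max X) t = Max X" using t by auto
  ultimately show "\<bar>(deriv ^^ m) \<phi> \<xi>1 - (deriv ^^ m) \<phi> \<xi>2\<bar> \<le> e" using e by simp
next
  have ne: "X \<noteq> {}" using fX by auto
  show "\<forall>x\<in>X. \<bar>t - x\<bar> \<le> dd"
  proof
    fix x assume "x \<in> X"
    then have "Min X \<le> x" "x \<le> Max X" using fX ne by auto
    then show "\<bar>t - x\<bar> \<le> dd" using t dd by (auto simp: abs_le_iff)
  qed
qed

lemma der_err:
  fixes \<phi> :: "real \<Rightarrow> real"
  assumes m: "0 < m" and c: "Cm m \<phi>" and fX: "finite X" "card X = Suc m"
    and e: "\<And>\<xi>1 \<xi>2. Min X \<le> \<xi>1 \<Longrightarrow> \<xi>1 \<le> Max X \<Longrightarrow> Min X \<le> \<xi>2 \<Longrightarrow> \<xi>2 \<le> Max X \<Longrightarrow>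
              \<bar>(deriv ^^ m) \<phi> \<xi>1 - (deriv ^^ m) \<phi> \<xi>2\<bar> \<le> e"
    and t: "Min X \<le> t" "t \<le> Max X" and dd: "Max X - Min X \<le> dd"
  shows "\<bar>deriv \<phi> t - poly (pderiv (interp_poly X \<phi>)) t\<bar> \<le> e / fact (m - 1) * dd ^ (m - 1)"
proof -
  define P where "P = interp_poly X \<phi>"
  define v where "v = (\<lambda>x. \<phi> x - poly P x)"
  have dv: "(v has_real_derivative deriv \<phi> x - poly (pderiv P) x) (at x)" for x
    unfolding v_def by (intro DERIV_diff Cm_DERIV[OF c m] poly_DERIV)
  have vd: "\<forall>t. v differentiable (at t)" using dv by (meson real_differentiable_def)
  have vz: "\<forall>s\<in>X. v s = 0" unfolding v_def P_def using interp_props(2)[OF fX] by auto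
  obtain Z where Z: "finite Z" "card Z = m" "Z \<subseteq> {Min X..Max X}" "\<forall>z\<in>Z. deriv v z = 0"
    using rolle_step[OF vd fX vz] by blast
  have Zi: "\<forall>z\<in>Z. poly (pderiv P) z = deriv \<phi> z"
    using Z(4) DERIV_imp_deriv[OF dv] by auto
  obtain k where k: "m = Suc k" using m by (cases m) auto
  have dk: "\<forall>i<k. \<forall>t. (deriv ^^ i) (deriv \<phi>) differentiable (at t)"
  proof (intro allI impI)
    fix i t assume "i < k"
    then have "Suc i < m" using k by simp
    then have "(deriv ^^ Suc i) \<phi> differentiable (at t)" by (rule Cm_diff[OF c])
    then show "(deriv ^^ i) (deriv \<phi>) differentiable (at t)" by (simp only: funpow_Suc_right o_def)
  qed
  have Dk: "(deriv ^^ k) (deriv \<phi>) = (deriv ^^ m) \<phi>" unfolding k by (simp only: funpow_Suc_right o_def)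
  have degP: "degree (pderiv P) \<le> k" using interp_props(1)[OF fX, of \<phi>] k unfolding P_def
    by (simp add: degree_pderiv)
  have fZ: "finite Z" "card Z = Suc k" using Z k by auto
  have neZ: "Z \<noteq> {}" using fZ by auto
  have mZ: "Min Z \<in> Z" "Max Z \<in> Z" using fZ neZ by auto
  have "\<bar>deriv \<phi> t - poly (pderiv P) t\<bar> \<le> e / fact k * dd ^ k"
  proof (rule interp_err[OF dk fZ degP Zi])
    fix \<xi>1 \<xi>2
    assume a: "min (Min Z) t \<le> \<xi>1" "\<xi>1 \<le> max (Max Z) t" "min (Min Z) t \<le> \<xi>2" "\<xi>2 \<le> max (Max Z) t"
    have "Min X \<le> Min Z" "Max Z \<le> Max X" using mZ Z(3) by auto
    then have "Min X \<le> \<xi>1" "\<xi>1 \<le> Max X" "Min X \<le> \<xi>2" "\<xi>2 \<le> Max X" using a t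
      by (simp_all add: min_le_iff_disj le_max_iff_disj, linarith+)
    then show "\<bar>(deriv ^^ k) (deriv \<phi>) \<xi>1 - (deriv ^^ k) (deriv \<phi>) \<xi>2\<bar> \<le> e" unfolding Dk by (rule e)
  next
    show "\<forall>x\<in>Z. \<bar>t - x\<bar> \<le> dd"
    proof
      fix x assume "x \<in> Z"
      then have "Min X \<le> x" "x \<le> Max X" using Z(3) by auto
      then show "\<bar>t - x\<bar> \<le> dd" using t dd by (auto simp: abs_le_iff)
    qed
  qed
  then show ?thesis unfolding P_def k by simp
qed




lemma core:
  fixes f g h f' g' h' :: "real \<Rightarrow> real" and P Q :: "real poly"
  assumes ab: "a \<le> b"
    and df: "\<And>t. (f has_real_derivative f' t) (at t)"
    and dg: "\<And>t. (g has_real_derivative g' t) (at t)"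
    and dh: "\<And>t. (h has_real_derivative h' t) (at t)"
    and hd: "\<And>t. h' t = 2 * (f' t * g t - f t * g' t)"
    and za: "f a = poly P a" "f b = poly P b" "g a = poly Q a" "g b = poly Q b"
  shows "((\<lambda>t. poly (pderiv P) t * (g t - poly Q t) - (f t - poly P t) * poly (pderiv Q) t
             - (f t - poly P t) * (g' t - poly (pderiv Q) t)) has_integral
          (h b - h a - 2 * integral {a..b} (\<lambda>t. poly (pderiv P) t * poly Q t - poly (pderiv Q) t * poly P t)) / 4) {a..b}"
proof -
  define F where "F = (\<lambda>t. h t - 2 * (- (poly P t) * (g t - poly Q t) + (f t - poly P t) * poly Q t
        + (f t - poly P t) * (g t - poly Q t)))"
  define F' where "F' = (\<lambda>t. h' t - 2 * ((- poly P t) * (g' t - poly (pderiv Q) t) + (- poly (pderiv P) t) * (g t - poly Q t)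
        + ((f t - poly P t) * poly (pderiv Q) t + (f' t - poly (pderiv P) t) * poly Q t)
        + ((f t - poly P t) * (g' t - poly (pderiv Q) t) + (f' t - poly (pderiv P) t) * (g t - poly Q t))))"
  have dF: "(F has_real_derivative F' t) (at t)" for t
    unfolding F_def F'_def
    by (intro DERIV_diff DERIV_cmult DERIV_add DERIV_mult' DERIV_minus df dg dh poly_DERIV)
  have "(F' has_integral (F b - F a)) {a..b}"
    using ab dF by (intro fundamental_theorem_of_calculus)
      (auto simp: has_real_derivative_iff_has_vector_derivative intro: has_vector_derivative_at_within)
  moreover have "F b - F a = h b - h a" unfolding F_def using za by simp
  ultimately have i1: "(F' has_integral (h b - h a)) {a..b}" by simp
  define J where "J = (\<lambda>t. poly (pderiv P) t * poly Q t - poly (pderiv Q) t * poly P t)"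
  have "continuous_on {a..b} J" unfolding J_def by (intro continuous_intros)
  then have i2: "(J has_integral integral {a..b} J) {a..b}"
    by (intro integrable_integral integrable_continuous_interval)
  have i3: "((\<lambda>t. 1/4 * (F' t - 2 * J t)) has_integral (1/4 * (h b - h a - 2 * integral {a..b} J))) {a..b}"
    by (intro has_integral_mult_right has_integral_diff i1 has_integral_mult_right i2)
  have eq: "(\<lambda>t. 1/4 * (F' t - 2 * J t)) = (\<lambda>t. poly (pderiv P) t * (g t - poly Q t) - (f t - poly P t) * poly (pderiv Q) t
             - (f t - poly P t) * (g' t - poly (pderiv Q) t))"
    unfolding F'_def J_def hd by (rule ext) (simp add: algebra_simps)
  show ?thesis using i3[unfolded eq] unfolding J_def by simp
qed




lemma part2:
  fixes f g h :: "real \<Rightarrow> real"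
  assumes m: "0 < m" and cf: "Cm m f" and cg: "Cm m g" and ch: "Cm m h"
    and hd: "\<And>t. deriv h t = 2 * (deriv f t * g t - f t * deriv g t)"
    and K: "compact K"
  shows "discrete_AV m f g h K"
  unfolding discrete_AV_def
proof (intro allI impI)
  fix \<epsilon> :: real assume e: "\<epsilon> > 0"
  obtain R where KR: "K \<subseteq> {-R..R}" using compact_in_interval[OF K] by blast
  define \<epsilon>0 where "\<epsilon>0 = min (\<epsilon> / 8) 1"
  have e0: "0 < \<epsilon>0" "\<epsilon>0 \<le> 1" "\<epsilon>0 \<le> \<epsilon> / 8" using e unfolding \<epsilon>0_def by auto
  have "uniformly_continuous_on {-R..R} ((deriv ^^ m) f)"
    using Cm_cont[OF cf order_refl] by (intro compact_uniformly_continuous) (auto intro: continuous_on_subset)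
  then obtain df where df: "df > 0" "\<forall>x\<in>{-R..R}. \<forall>x'\<in>{-R..R}. dist x' x < df \<longrightarrow>
      dist ((deriv ^^ m) f x') ((deriv ^^ m) f x) < \<epsilon>0"
    unfolding uniformly_continuous_on_def using e0 by blast
  have "uniformly_continuous_on {-R..R} ((deriv ^^ m) g)"
    using Cm_cont[OF cg order_refl] by (intro compact_uniformly_continuous) (auto intro: continuous_on_subset)
  then obtain dg where dg: "dg > 0" "\<forall>x\<in>{-R..R}. \<forall>x'\<in>{-R..R}. dist x' x < dg \<longrightarrow>
      dist ((deriv ^^ m) g x') ((deriv ^^ m) g x) < \<epsilon>0"
    unfolding uniformly_continuous_on_def using e0 by blast
  show "\<exists>\<delta>>0. \<forall>X a b. X \<subseteq> K \<and> finite X \<and> card X = m + 1 \<and> diameter X < \<delta> \<and> a \<in> X \<and> b \<in> X \<and> a < b \<longrightarrow>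
          \<bar>AVA X f g h a b / AVV m X f g a b\<bar> < \<epsilon>"
  proof (intro exI[of _ "min df dg"] conjI allI impI)
    show "0 < min df dg" using df dg by simp
    fix X a b
    assume A: "X \<subseteq> K \<and> finite X \<and> card X = m + 1 \<and> diameter X < min df dg \<and> a \<in> X \<and> b \<in> X \<and> a < b"
    have fX: "finite X" "card X = Suc m" using A by auto
    have ne: "X \<noteq> {}" using fX by auto
    define D where "D = diameter X"
    have mem: "Min X \<in> X" "Max X \<in> X" using fX ne by auto
    have hl: "Max X - Min X \<le> D" unfolding D_def using diam_ge[OF fX(1) mem(2,1)] by simp
    have aX: "a \<in> X" and bX: "b \<in> X" and ab: "a < b" using A by auto
    have abh: "Min X \<le> a" "b \<le> Max X" using aX bX fX by auto
    have baD: "b - a \<le> D" unfolding D_def using diam_ge[OF fX(1) bX aX] by simp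
    have D0: "0 < D" using baD ab by simp
    have Dd: "D < df" "D < dg" using A unfolding D_def by auto
    have inR: "Min X \<in> {-R..R}" "Max X \<in> {-R..R}" using mem A KR by auto
    have ef: "\<bar>(deriv ^^ m) f \<xi>1 - (deriv ^^ m) f \<xi>2\<bar> \<le> \<epsilon>0"
      if "Min X \<le> \<xi>1" "\<xi>1 \<le> Max X" "Min X \<le> \<xi>2" "\<xi>2 \<le> Max X" for \<xi>1 \<xi>2
    proof -
      have "\<xi>1 \<in> {-R..R}" "\<xi>2 \<in> {-R..R}" using that inR by auto
      moreover have "dist \<xi>1 \<xi>2 < df" using that hl Dd by (auto simp: dist_real_def abs_le_iff)
      ultimately show ?thesis using df(2) by (force simp: dist_real_def)
    qed
    have eg: "\<bar>(deriv ^^ m) g \<xi>1 - (deriv ^^ m) g \<xi>2\<bar> \<le> \<epsilon>0"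
      if "Min X \<le> \<xi>1" "\<xi>1 \<le> Max X" "Min X \<le> \<xi>2" "\<xi>2 \<le> Max X" for \<xi>1 \<xi>2
    proof -
      have "\<xi>1 \<in> {-R..R}" "\<xi>2 \<in> {-R..R}" using that inR by auto
      moreover have "dist \<xi>1 \<xi>2 < dg" using that hl Dd by (auto simp: dist_real_def abs_le_iff)
      ultimately show ?thesis using dg(2) by (force simp: dist_real_def)
    qed
    define Pf where "Pf = interp_poly X f"
    define Pg where "Pg = interp_poly X g"
    have fact1: "e / fact k * D ^ k \<le> e * D ^ k" if "0 \<le> e" for e and k :: nat
    proof -
      have "e / fact k \<le> e" using that by (simp add: divide_le_eq mult_le_cancel_left1)
      then show ?thesis using D0 by (intro mult_right_mono) auto
    qed
    have bu: "\<bar>f t - poly Pf t\<bar> \<le> \<epsilon>0 * D ^ m" if "t \<in> {a..b}" for t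
      using val_err[OF cf fX ef _ _ hl, of t] that abh fact1[of \<epsilon>0 m] e0 unfolding Pf_def by auto
    have bv: "\<bar>g t - poly Pg t\<bar> \<le> \<epsilon>0 * D ^ m" if "t \<in> {a..b}" for t
      using val_err[OF cg fX eg _ _ hl, of t] that abh fact1[of \<epsilon>0 m] e0 unfolding Pg_def by auto
    have bw: "\<bar>deriv g t - poly (pderiv Pg) t\<bar> \<le> \<epsilon>0 * D ^ (m - 1)" if "t \<in> {a..b}" for t
      using der_err[OF m cg fX eg _ _ hl, of t] that abh fact1[of \<epsilon>0 "m - 1"] e0 unfolding Pg_def by auto
    have za: "f a = poly Pf a" "f b = poly Pf b" "g a = poly Pg a" "g b = poly Pg b"
      using interp_props(2)[OF fX, of f] interp_props(2)[OF fX, of g] aX bX unfolding Pf_def Pg_def by auto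
    define Rf where "Rf = (\<lambda>t. poly (pderiv Pf) t * (g t - poly Pg t) - (f t - poly Pf t) * poly (pderiv Pg) t
             - (f t - poly Pf t) * (deriv g t - poly (pderiv Pg) t))"
    have iR: "(Rf has_integral AVA X f g h a b / 4) {a..b}"
      unfolding Rf_def AVA_def Pf_def[symmetric] Pg_def[symmetric]
      by (rule core[OF less_imp_le[OF ab] Cm_DERIV[OF cf m] Cm_DERIV[OF cg m] Cm_DERIV[OF ch m] hd za])
    define IA where "IA = integral {a..b} (\<lambda>t. \<bar>poly (pderiv Pf) t\<bar> + \<bar>poly (pderiv Pg) t\<bar>)"
    have cA: "continuous_on {a..b} (\<lambda>t. \<bar>poly (pderiv Pf) t\<bar> + \<bar>poly (pderiv Pg) t\<bar>)"
      by (intro continuous_intros)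
    have iA: "((\<lambda>t. \<bar>poly (pderiv Pf) t\<bar> + \<bar>poly (pderiv Pg) t\<bar>) has_integral IA) {a..b}"
      unfolding IA_def by (intro integrable_integral integrable_continuous_interval cA)
    have IA0: "0 \<le> IA" unfolding IA_def
      by (rule integral_nonneg) (auto intro: integrable_continuous_interval cA)
    define c1 where "c1 = \<epsilon>0 * D ^ m"
    define c2 where "c2 = \<epsilon>0 * D ^ m * (\<epsilon>0 * D ^ (m - 1))"
    have c10: "0 \<le> c1" unfolding c1_def using e0 D0 by simp
    define B where "B = (\<lambda>t. c1 * (\<bar>poly (pderiv Pf) t\<bar> + \<bar>poly (pderiv Pg) t\<bar>) + c2)"
    have iB: "(B has_integral (c1 * IA + (b - a) * c2)) {a..b}"
      unfolding B_def using has_integral_add[OF has_integral_mult_right[OF iA, of c1] has_integral_const_real[of c2 a b]]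
      using ab by (simp add: content_real)
    have RB: "norm (Rf t) \<le> B t" if t: "t \<in> {a..b}" for t
    proof -
      have u: "\<bar>f t - poly Pf t\<bar> \<le> c1" and v: "\<bar>g t - poly Pg t\<bar> \<le> c1"
        and w: "\<bar>deriv g t - poly (pderiv Pg) t\<bar> \<le> \<epsilon>0 * D ^ (m - 1)"
        using bu[OF t] bv[OF t] bw[OF t] unfolding c1_def by auto
      have t1: "\<bar>poly (pderiv Pf) t * (g t - poly Pg t)\<bar> \<le> c1 * \<bar>poly (pderiv Pf) t\<bar>"
        unfolding abs_mult using v by (metis abs_ge_zero mult.commute mult_right_mono)
      have t2: "\<bar>(f t - poly Pf t) * poly (pderiv Pg) t\<bar> \<le> c1 * \<bar>poly (pderiv Pg) t\<bar>"
        unfolding abs_mult using u by (simp add: mult_right_mono)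
      have t3: "\<bar>(f t - poly Pf t) * (deriv g t - poly (pderiv Pg) t)\<bar> \<le> c2"
        unfolding abs_mult c2_def c1_def[symmetric] using u w c10 by (intro mult_mono) auto
      show ?thesis unfolding Rf_def B_def real_norm_def using t1 t2 t3
        by (simp add: distrib_left)
    qed
    have "norm (integral {a..b} Rf) \<le> integral {a..b} B"
      using iR iB RB by (intro integral_norm_bound_integral) auto
    then have bnd: "\<bar>AVA X f g h a b / 4\<bar> \<le> c1 * IA + (b - a) * c2"
      using integral_unique[OF iR] integral_unique[OF iB] by simp
    have V: "AVV m X f g a b = D ^ (2 * m) + D ^ m * IA"
      unfolding AVV_def D_def IA_def Pf_def Pg_def by simp
    have DD: "D ^ m * D ^ (m - 1) * D = D ^ (2 * m)"
    proof -
      have "D ^ m * D ^ (m - 1) * D = D ^ (m + (m - 1) + 1)" by (simp add: power_add)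
      also have "m + (m - 1) + 1 = 2 * m" using m by simp
      finally show ?thesis .
    qed
    have "(b - a) * c2 = (\<epsilon>0 * \<epsilon>0) * ((b - a) * (D ^ m * D ^ (m - 1)))" unfolding c2_def by (simp add: algebra_simps)
    also have "\<dots> \<le> (\<epsilon>0 * \<epsilon>0) * (D * (D ^ m * D ^ (m - 1)))"
      using baD D0 e0 by (intro mult_left_mono mult_right_mono) auto
    also have "\<dots> = (\<epsilon>0 * \<epsilon>0) * D ^ (2 * m)" using DD by (simp add: algebra_simps)
    also have "\<dots> \<le> \<epsilon>0 * D ^ (2 * m)" using e0 D0 by (intro mult_right_mono) (auto simp: mult_le_cancel_left1)
    finally have bc2: "(b - a) * c2 \<le> \<epsilon>0 * D ^ (2 * m)" .
    have Vpos: "0 < AVV m X f g a b" unfolding V using D0 IA0 by (simp add: add_pos_nonneg)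
    have "\<bar>AVA X f g h a b\<bar> \<le> 4 * (c1 * IA + (b - a) * c2)" using bnd by simp
    also have "\<dots> \<le> 4 * (\<epsilon>0 * AVV m X f g a b)" unfolding V c1_def using bc2 by (simp add: algebra_simps)
    finally have "\<bar>AVA X f g h a b\<bar> \<le> 4 * \<epsilon>0 * AVV m X f g a b" by simp
    then have "\<bar>AVA X f g h a b / AVV m X f g a b\<bar> \<le> 4 * \<epsilon>0"
      using Vpos by (simp add: abs_div pos_divide_le_eq)
    also have "\<dots> < \<epsilon>" using e0 e by simp
    finally show "\<bar>AVA X f g h a b / AVV m X f g a b\<bar> < \<epsilon>" .
  qed
qed




theorem proposition5p1:
  fixes f g h :: "real \<Rightarrow> real" and m :: nat and K :: "real set"
  assumes "m > 0"
    and "Cm m f" and "Cm m g" and "Cm m h"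
    and "horizontal f g h"
    and "compact K"
  shows "divdiff_unif_conv m f K \<and> divdiff_unif_conv m g K \<and> divdiff_unif_conv m h K
         \<and> discrete_AV m f g h K"
proof -
  have ae0: "AE t in lborel. f differentiable (at t) \<and> g differentiable (at t) \<and>
        (h has_real_derivative 2 * (deriv f t * g t - f t * deriv g t)) (at t)"
    using assms(5) unfolding horizontal_def by blast
  have ae: "AE t in lborel. deriv h t = 2 * (deriv f t * g t - f t * deriv g t)"
    using ae0 by (rule eventually_mono) (auto intro: DERIV_imp_deriv)
  have c1: "continuous_on UNIV (deriv h)" using Cm_cont1[OF assms(4,1)] .
  have c2: "continuous_on UNIV (\<lambda>t. 2 * (deriv f t * g t - f t * deriv g t))"
    using Cm_cont1[OF assms(2,1)] Cm_cont1[OF assms(3,1)] Cm_cont0[OF assms(2)] Cm_cont0[OF assms(3)]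
    by (intro continuous_intros) auto
  have hd: "\<And>t. deriv h t = 2 * (deriv f t * g t - f t * deriv g t)"
    using AE_cont_eq[OF c1 c2 ae] .
  show ?thesis
    using part1[OF assms(2,6)] part1[OF assms(3,6)] part1[OF assms(4,6)]
      part2[OF assms(1-4) hd assms(6)] by blast
qed


end
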